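(* For every integer $m\ge 2$ and every integer $i$ with $1\le i\le m-1$, $$d_i^2(m)\bigl(d_i^2(m)-d_{i-1}(m)d_{i+1}(m)\bigr)>d_{i-1}^2(m)\bigl(d_{i+1}^2(m)-d_i(m)d_{i+2}(m)\bigr).$$
   Context: For integers $m\ge 0$ and $0\le i\le m$, the Boros–Moll numbers are $$d_i(m)=2^{-2m}\sum_{k=i}^{m}2^k\binom{2m-2k}{m-k}\binom{m+k}{k}\binom{k}{i},$$ i.e. $d_i(m)$ is the coefficient of $x^i$ in $P_m(x)=2^{-2m}\sum_{k=0}^m 2^k\binom{2m-2k}{m-k}\binom{m+k}{k}(x+1)^k$. By convention $d_i(m)=0$ for $i>m$ (consistent with the formula, since $\binom{k}{i}=0$ for $k<i$). *)

theory Defs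
  imports Complex_Main
begin

text \<open>Boros--Moll numbers d_i(m). For i > m the sum is empty and the value is 0,
matching the convention.\<close>
definition boros_moll :: "nat \<Rightarrow> nat \<Rightarrow> real" where
  "boros_moll i m = (1 / 2 ^ (2 * m)) *
     (\<Sum>k = i..m. 2 ^ k * real ((2*m - 2*k) choose (m - k)) *
        real ((m + k) choose k) * real (k choose i))"

end

theory Submission
  imports Defs
begin

definition PW :: "real \<Rightarrow> real \<Rightarrow> real \<Rightarrow> real" where
 "PW i n s = (let m = i + n; Y = n*(2*i+1+s); W = 2*(i+1)^2;
     K = (n+1)*(m+i); AW = (2*m+1)*i*W - i*(i+1)*Y in
     (i+1)*(i+2)*(K^2*W^4 - K*Y*AW*W^2 - Y^2*AW^2) + AW^2*((2*m+1)*(i+1)*Y*W - n*(m+i+1)*W^2))"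

lemma poly_id:
  fixes p q s t :: real
  assumes "t = 1 - s"
  shows "PW (p+1) (q+1) s = (568808*t^4 + 557056*s^4) + (2271104*s*t^3 + 3391872*s^2*t^2 + 2246656*s^3*t + 820640*q*t^4 + 3256064*q*s*t^3 + 4825344*q*s^2*t^2 + 3168256*q*s^3*t + 778240*q*s^4 + 452592*q^2*t^4 + 1777920*q^2*s*t^3 + 2606208*q^2*s^2*t^2 + 1692672*q^2*s^3*t + 411648*q^2*s^4 + 113312*q^3*t^4 + 442112*q^3*s*t^3 + 645120*q^3*s^2*t^2 + 418816*q^3*s^3*t + 102400*q^3*s^4 + 10856*q^4*t^4 + 42368*q^4*s*t^3 + 62208*q^4*s^2*t^2 + 40960*q^4*s^3*t + 10240*q^4*s^4 + 3344900*p*t^4 + 13410848*p*s*t^3 + 20108224*p*s^2*t^2 + 13368320*p*s^3*t + 3325952*p*s^4 + 4458288*p*q*t^4 + 17765792*p*q*s*t^3 + 26426112*p*q*s^2*t^2 + 17403392*p*q*s^3*t + 4284416*p*q*s^4 + 2254904*p*q^2*t^4 + 8874400*p*q^2*s*t^3 + 13016384*p*q^2*s^2*t^2 + 8446464*p*q^2*s^3*t + 2049024*p*q^2*s^4 + 514288*p*q^3*t^4 + 2006240*p*q^3*s*t^3 + 2923136*p*q^3*s^2*t^2 + 1892352*p*q^3*s^3*t + 460800*p*q^3*s^4 + 44516*p*q^4*t^4 + 173760*p*q^4*s*t^3 + 255104*p*q^4*s^2*t^2 + 167936*p*q^4*s^3*t + 41984*p*q^4*s^4 + 8967090*p^2*t^4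 + 36138880*p^2*s*t^3 + 54459712*p^2*s^2*t^2 + 36381184*p^2*s^3*t + 9093120*p^2*s^4 + 10976584*p^2*q*t^4 + 44002880*p^2*q*s*t^3 + 65809088*p^2*q*s^2*t^2 + 43547648*p^2*q*s^3*t + 10764288*p^2*q*s^4 + 5046700*p^2*q^2*t^4 + 19918528*p^2*q^2*s*t^3 + 29259968*p^2*q^2*s^2*t^2 + 18986240*p^2*q^2*s^3*t + 4597248*p^2*q^2*s^4 + 1036104*p^2*q^3*t^4 + 4042688*p^2*q^3*s*t^3 + 5883200*p^2*q^3*s^2*t^2 + 3797760*p^2*q^3*s^3*t + 920576*p^2*q^3*s^4 + 79666*p^2*q^4*t^4 + 311232*p^2*q^4*s*t^3 + 457216*p^2*q^4*s^2*t^2 + 301056*p^2*q^4*s^3*t + 75264*p^2*q^4*s^4 + 14485503*p^3*t^4 + 58754064*p^3*s*t^3 + 89096864*p^3*s^2*t^2 + 59885312*p^3*s^3*t + 15056896*p^3*s^4 + 16166348*p^3*q*t^4 + 65340560*p^3*q*s*t^3 + 98472320*p^3*q*s^2*t^2 + 65625216*p^3*q*s^3*t + 16326656*p^3*q*s^4 + 6682506*p^3*q^2*t^4 + 26483344*p^3*q^2*s*t^3 + 39010784*p^3*q^2*s^2*t^2 + 25341568*p^3*q^2*s^3*t + 6130944*p^3*q^2*s^4 + 1216300*p^3*q^3*t^4 + 4748336*p^3*q^3*s*t^3 + 6903360*p^3*q^3*s^2*t^2 + 4443392*p^3*q^3*s^3*t + 1071616*p^3*q^3*s^4 + 81263*p^3*q^4*t^4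 + 317984*p^3*q^4*s*t^3 + 467776*p^3*q^4*s^2*t^2 + 308224*p^3*q^4*s^3*t + 77056*p^3*q^4*s^4 + 15696159*p^4*t^4 + 64168584*p^4*s*t^3 + 98062520*p^4*s^2*t^2 + 66412416*p^4*s^3*t + 16822272*p^4*s^4 + 15824268*p^4*q*t^4 + 64681984*p^4*q*s*t^3 + 98524464*p^4*q*s^2*t^2 + 66326400*p^4*q*s^3*t + 16659456*p^4*q*s^4 + 5798098*p^4*q^2*t^4 + 23112160*p^4*q^2*s*t^3 + 34195752*p^4*q^2*s^2*t^2 + 22275520*p^4*q^2*s^3*t + 5393536*p^4*q^2*s^4 + 917052*p^4*q^3*t^4 + 3583008*p^4*q^3*s*t^3 + 5204960*p^4*q^3*s^2*t^2 + 3340224*p^4*q^3*s^3*t + 801024*p^4*q^3*s^4 + 51671*p^4*q^4*t^4 + 202680*p^4*q^4*s*t^3 + 298800*p^4*q^4*s^2*t^2 + 197120*p^4*q^4*s^3*t + 49280*p^4*q^4*s^4 + 12010987*p^5*t^4 + 49582370*p^5*s*t^3 + 76491116*p^5*s^2*t^2 + 52282944*p^5*s^3*t + 13363200*p^5*s^4 + 10807534*p^5*q*t^4 + 44874666*p^5*q*s*t^3 + 69372464*p^5*q*s^2*t^2 + 47362976*p^5*q*s^3*t + 12057600*p^5*q*s^4 + 3444836*p^5*q^2*t^4 + 13845866*p^5*q^2*s*t^3 + 20626404*p^5*q^2*s^2*t^2 + 13507040*p^5*q^2*s^3*t + 3281600*p^5*q^2*s^4 + 460618*p^5*q^3*t^4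 + 1801534*p^5*q^3*s*t^3 + 2615240*p^5*q^3*s^2*t^2 + 1673088*p^5*q^3*s^3*t + 398720*p^5*q^3*s^4 + 20969*p^5*q^4*t^4 + 82524*p^5*q^4*s*t^3 + 122024*p^5*q^4*s^2*t^2 + 80640*p^5*q^4*s^3*t + 20160*p^5*q^4*s^4 + 6649911*p^6*t^4 + 27783184*p^6*s*t^3 + 43356984*p^6*s^2*t^2 + 29965152*p^6*s^3*t + 7741440*p^6*s^4 + 5254048*p^6*q*t^4 + 22309816*p^6*q*s*t^3 + 35208596*p^6*q*s^2*t^2 + 24507264*p^6*q*s^3*t + 6354432*p^6*q*s^4 + 1419490*p^6*q^2*t^4 + 5775312*p^6*q^2*s*t^3 + 8695224*p^6*q^2*s^2*t^2 + 5745904*p^6*q^2*s^3*t + 1406496*p^6*q^2*s^4 + 154160*p^6*q^3*t^4 + 603656*p^6*q^3*s*t^3 + 875748*p^6*q^3*s^2*t^2 + 558416*p^6*q^3*s^3*t + 132160*p^6*q^3*s^4 + 5303*p^6*q^4*t^4 + 20960*p^6*q^4*s*t^3 + 31112*p^6*q^4*s^2*t^2 + 20608*p^6*q^4*s^3*t + 5152*p^6*q^4*s^4 + 2681166*p^7*t^4 + 11370522*p^7*s*t^3 + 17993628*p^7*s^2*t^2 + 12600528*p^7*s^3*t + 3296256*p^7*s^4 + 1817522*p^7*q*t^4 + 7977194*p^7*q*s*t^3 + 12961968*p^7*q*s^2*t^2 + 9262968*p^7*q*s^3*t + 2460672*p^7*q*s^4 + 400622*p^7*q^2*t^4 + 1661130*p^7*q^2*s*t^3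 + 2543524*p^7*q^2*s^2*t^2 + 1706680*p^7*q^2*s^3*t + 423664*p^7*q^2*s^4 + 33158*p^7*q^3*t^4 + 130006*p^7*q^3*s*t^3 + 188480*p^7*q^3*s^2*t^2 + 119760*p^7*q^3*s^3*t + 28128*p^7*q^3*s^4 + 764*p^7*q^4*t^4 + 3036*p^7*q^4*s*t^3 + 4528*p^7*q^4*s^2*t^2 + 3008*p^7*q^4*s^3*t + 752*p^7*q^4*s^4 + 780252*p^8*t^4 + 3371556*p^8*s*t^3 + 5426472*p^8*s^2*t^2 + 3859296*p^8*s^3*t + 1024128*p^8*s^4 + 438232*p^8*q*t^4 + 2024692*p^8*q*s*t^3 + 3430940*p^8*q*s^2*t^2 + 2540768*p^8*q*s^3*t + 696288*p^8*q*s^4 + 74124*p^8*q^2*t^4 + 317404*p^8*q^2*s*t^3 + 500032*p^8*q^2*s^2*t^2 + 344384*p^8*q^2*s^3*t + 87632*p^8*q^2*s^4 + 4160*p^8*q^3*t^4 + 16332*p^8*q^3*s*t^3 + 23660*p^8*q^3*s^2*t^2 + 14976*p^8*q^3*s^3*t + 3488*p^8*q^3*s^4 + 48*p^8*q^4*t^4 + 192*p^8*q^4*s*t^3 + 288*p^8*q^4*s^2*t^2 + 192*p^8*q^4*s^3*t + 48*p^8*q^4*s^4 + 159552*p^9*t^4 + 706000*p^9*s*t^3 + 1159840*p^9*s^2*t^2 + 839888*p^9*s^3*t + 226496*p^9*s^4 + 70096*p^9*q*t^4 + 352776*p^9*q*s*t^3 + 636032*p^9*q*s^2*t^2 + 494120*p^9*q*s^3*t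 + 140768*p^9*q*s^4 + 8120*p^9*q^2*t^4 + 37064*p^9*q^2*s*t^3 + 61576*p^9*q^2*s^2*t^2 + 44440*p^9*q^2*s^3*t + 11808*p^9*q^2*s^4 + 232*p^9*q^3*t^4 + 912*p^9*q^3*s*t^3 + 1320*p^9*q^3*s^2*t^2 + 832*p^9*q^3*s^3*t + 192*p^9*q^3*s^4 + 21712*p^10*t^4 + 99040*p^10*s*t^3 + 166800*p^10*s^2*t^2 + 123328*p^10*s^3*t + 33856*p^10*s^4 + 6688*p^10*q*t^4 + 39520*p^10*q*s*t^3 + 78336*p^10*q*s^2*t^2 + 64864*p^10*q*s^3*t + 19360*p^10*q*s^4 + 400*p^10*q^2*t^4 + 2176*p^10*q^2*s*t^3 + 4080*p^10*q^2*s^2*t^2 + 3232*p^10*q^2*s^3*t + 928*p^10*q^2*s^4 + 1760*p^11*t^4 + 8352*p^11*s*t^3 + 14496*p^11*s^2*t^2 + 10976*p^11*s^3*t + 3072*p^11*s^4 + 288*p^11*q*t^4 + 2496*p^11*q*s*t^3 + 5760*p^11*q*s^2*t^2 + 5184*p^11*q*s^3*t + 1632*p^11*q*s^4 + 32*p^11*q^2*s*t^3 + 96*p^11*q^2*s^2*t^2 + 96*p^11*q^2*s^3*t + 32*p^11*q^2*s^4 + 64*p^12*t^4 + 320*p^12*s*t^3 + 576*p^12*s^2*t^2 + 448*p^12*s^3*t + 128*p^12*s^4 + 64*p^12*q*s*t^3 + 192*p^12*q*s^2*t^2 + 192*p^12*q*s^3*t + 64*p^12*q*s^4)"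
  unfolding PW_def Let_def assms by algebra

lemma R_nonneg:
  fixes p q s t :: real
  assumes "0 \<le> p" "0 \<le> q" "0 \<le> s" "0 \<le> t"
  shows "0 \<le> 2271104*s*t^3 + 3391872*s^2*t^2 + 2246656*s^3*t + 820640*q*t^4 + 3256064*q*s*t^3 + 4825344*q*s^2*t^2 + 3168256*q*s^3*t + 778240*q*s^4 + 452592*q^2*t^4 + 1777920*q^2*s*t^3 + 2606208*q^2*s^2*t^2 + 1692672*q^2*s^3*t + 411648*q^2*s^4 + 113312*q^3*t^4 + 442112*q^3*s*t^3 + 645120*q^3*s^2*t^2 + 418816*q^3*s^3*t + 102400*q^3*s^4 + 10856*q^4*t^4 + 42368*q^4*s*t^3 + 62208*q^4*s^2*t^2 + 40960*q^4*s^3*t + 10240*q^4*s^4 + 3344900*p*t^4 + 13410848*p*s*t^3 + 20108224*p*s^2*t^2 + 13368320*p*s^3*t + 3325952*p*s^4 + 4458288*p*q*t^4 + 17765792*p*q*s*t^3 + 26426112*p*q*s^2*t^2 + 17403392*p*q*s^3*t + 4284416*p*q*s^4 + 2254904*p*q^2*t^4 + 8874400*p*q^2*s*t^3 + 13016384*p*q^2*s^2*t^2 + 8446464*p*q^2*s^3*t + 2049024*p*q^2*s^4 + 514288*p*q^3*t^4 + 2006240*p*q^3*s*t^3 + 2923136*p*q^3*s^2*t^2 + 1892352*p*q^3*s^3*t + 460800*p*q^3*s^4 + 44516*p*q^4*t^4 + 173760*p*q^4*s*t^3 + 255104*p*q^4*s^2*t^2 + 167936*p*q^4*s^3*t + 41984*p*q^4*s^4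 + 8967090*p^2*t^4 + 36138880*p^2*s*t^3 + 54459712*p^2*s^2*t^2 + 36381184*p^2*s^3*t + 9093120*p^2*s^4 + 10976584*p^2*q*t^4 + 44002880*p^2*q*s*t^3 + 65809088*p^2*q*s^2*t^2 + 43547648*p^2*q*s^3*t + 10764288*p^2*q*s^4 + 5046700*p^2*q^2*t^4 + 19918528*p^2*q^2*s*t^3 + 29259968*p^2*q^2*s^2*t^2 + 18986240*p^2*q^2*s^3*t + 4597248*p^2*q^2*s^4 + 1036104*p^2*q^3*t^4 + 4042688*p^2*q^3*s*t^3 + 5883200*p^2*q^3*s^2*t^2 + 3797760*p^2*q^3*s^3*t + 920576*p^2*q^3*s^4 + 79666*p^2*q^4*t^4 + 311232*p^2*q^4*s*t^3 + 457216*p^2*q^4*s^2*t^2 + 301056*p^2*q^4*s^3*t + 75264*p^2*q^4*s^4 + 14485503*p^3*t^4 + 58754064*p^3*s*t^3 + 89096864*p^3*s^2*t^2 + 59885312*p^3*s^3*t + 15056896*p^3*s^4 + 16166348*p^3*q*t^4 + 65340560*p^3*q*s*t^3 + 98472320*p^3*q*s^2*t^2 + 65625216*p^3*q*s^3*t + 16326656*p^3*q*s^4 + 6682506*p^3*q^2*t^4 + 26483344*p^3*q^2*s*t^3 + 39010784*p^3*q^2*s^2*t^2 + 25341568*p^3*q^2*s^3*t + 6130944*p^3*q^2*s^4 + 1216300*p^3*q^3*t^4 + 4748336*p^3*q^3*s*t^3 + 6903360*p^3*q^3*s^2*t^2 + 4443392*p^3*q^3*s^3*t + 1071616*p^3*q^3*s^4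 + 81263*p^3*q^4*t^4 + 317984*p^3*q^4*s*t^3 + 467776*p^3*q^4*s^2*t^2 + 308224*p^3*q^4*s^3*t + 77056*p^3*q^4*s^4 + 15696159*p^4*t^4 + 64168584*p^4*s*t^3 + 98062520*p^4*s^2*t^2 + 66412416*p^4*s^3*t + 16822272*p^4*s^4 + 15824268*p^4*q*t^4 + 64681984*p^4*q*s*t^3 + 98524464*p^4*q*s^2*t^2 + 66326400*p^4*q*s^3*t + 16659456*p^4*q*s^4 + 5798098*p^4*q^2*t^4 + 23112160*p^4*q^2*s*t^3 + 34195752*p^4*q^2*s^2*t^2 + 22275520*p^4*q^2*s^3*t + 5393536*p^4*q^2*s^4 + 917052*p^4*q^3*t^4 + 3583008*p^4*q^3*s*t^3 + 5204960*p^4*q^3*s^2*t^2 + 3340224*p^4*q^3*s^3*t + 801024*p^4*q^3*s^4 + 51671*p^4*q^4*t^4 + 202680*p^4*q^4*s*t^3 + 298800*p^4*q^4*s^2*t^2 + 197120*p^4*q^4*s^3*t + 49280*p^4*q^4*s^4 + 12010987*p^5*t^4 + 49582370*p^5*s*t^3 + 76491116*p^5*s^2*t^2 + 52282944*p^5*s^3*t + 13363200*p^5*s^4 + 10807534*p^5*q*t^4 + 44874666*p^5*q*s*t^3 + 69372464*p^5*q*s^2*t^2 + 47362976*p^5*q*s^3*t + 12057600*p^5*q*s^4 + 3444836*p^5*q^2*t^4 + 13845866*p^5*q^2*s*t^3 + 20626404*p^5*q^2*s^2*t^2 + 13507040*p^5*q^2*s^3*t + 3281600*p^5*q^2*s^4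 + 460618*p^5*q^3*t^4 + 1801534*p^5*q^3*s*t^3 + 2615240*p^5*q^3*s^2*t^2 + 1673088*p^5*q^3*s^3*t + 398720*p^5*q^3*s^4 + 20969*p^5*q^4*t^4 + 82524*p^5*q^4*s*t^3 + 122024*p^5*q^4*s^2*t^2 + 80640*p^5*q^4*s^3*t + 20160*p^5*q^4*s^4 + 6649911*p^6*t^4 + 27783184*p^6*s*t^3 + 43356984*p^6*s^2*t^2 + 29965152*p^6*s^3*t + 7741440*p^6*s^4 + 5254048*p^6*q*t^4 + 22309816*p^6*q*s*t^3 + 35208596*p^6*q*s^2*t^2 + 24507264*p^6*q*s^3*t + 6354432*p^6*q*s^4 + 1419490*p^6*q^2*t^4 + 5775312*p^6*q^2*s*t^3 + 8695224*p^6*q^2*s^2*t^2 + 5745904*p^6*q^2*s^3*t + 1406496*p^6*q^2*s^4 + 154160*p^6*q^3*t^4 + 603656*p^6*q^3*s*t^3 + 875748*p^6*q^3*s^2*t^2 + 558416*p^6*q^3*s^3*t + 132160*p^6*q^3*s^4 + 5303*p^6*q^4*t^4 + 20960*p^6*q^4*s*t^3 + 31112*p^6*q^4*s^2*t^2 + 20608*p^6*q^4*s^3*t + 5152*p^6*q^4*s^4 + 2681166*p^7*t^4 + 11370522*p^7*s*t^3 + 17993628*p^7*s^2*t^2 + 12600528*p^7*s^3*t + 3296256*p^7*s^4 + 1817522*p^7*q*t^4 + 7977194*p^7*q*s*t^3 + 12961968*p^7*q*s^2*t^2 + 9262968*p^7*q*s^3*t + 2460672*p^7*q*s^4 + 400622*p^7*q^2*t^4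 + 1661130*p^7*q^2*s*t^3 + 2543524*p^7*q^2*s^2*t^2 + 1706680*p^7*q^2*s^3*t + 423664*p^7*q^2*s^4 + 33158*p^7*q^3*t^4 + 130006*p^7*q^3*s*t^3 + 188480*p^7*q^3*s^2*t^2 + 119760*p^7*q^3*s^3*t + 28128*p^7*q^3*s^4 + 764*p^7*q^4*t^4 + 3036*p^7*q^4*s*t^3 + 4528*p^7*q^4*s^2*t^2 + 3008*p^7*q^4*s^3*t + 752*p^7*q^4*s^4 + 780252*p^8*t^4 + 3371556*p^8*s*t^3 + 5426472*p^8*s^2*t^2 + 3859296*p^8*s^3*t + 1024128*p^8*s^4 + 438232*p^8*q*t^4 + 2024692*p^8*q*s*t^3 + 3430940*p^8*q*s^2*t^2 + 2540768*p^8*q*s^3*t + 696288*p^8*q*s^4 + 74124*p^8*q^2*t^4 + 317404*p^8*q^2*s*t^3 + 500032*p^8*q^2*s^2*t^2 + 344384*p^8*q^2*s^3*t + 87632*p^8*q^2*s^4 + 4160*p^8*q^3*t^4 + 16332*p^8*q^3*s*t^3 + 23660*p^8*q^3*s^2*t^2 + 14976*p^8*q^3*s^3*t + 3488*p^8*q^3*s^4 + 48*p^8*q^4*t^4 + 192*p^8*q^4*s*t^3 + 288*p^8*q^4*s^2*t^2 + 192*p^8*q^4*s^3*t + 48*p^8*q^4*s^4 + 159552*p^9*t^4 + 706000*p^9*s*t^3 + 1159840*p^9*s^2*t^2 + 839888*p^9*s^3*t + 226496*p^9*s^4 + 70096*p^9*q*t^4 + 352776*p^9*q*s*t^3 + 636032*p^9*q*s^2*t^2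 + 494120*p^9*q*s^3*t + 140768*p^9*q*s^4 + 8120*p^9*q^2*t^4 + 37064*p^9*q^2*s*t^3 + 61576*p^9*q^2*s^2*t^2 + 44440*p^9*q^2*s^3*t + 11808*p^9*q^2*s^4 + 232*p^9*q^3*t^4 + 912*p^9*q^3*s*t^3 + 1320*p^9*q^3*s^2*t^2 + 832*p^9*q^3*s^3*t + 192*p^9*q^3*s^4 + 21712*p^10*t^4 + 99040*p^10*s*t^3 + 166800*p^10*s^2*t^2 + 123328*p^10*s^3*t + 33856*p^10*s^4 + 6688*p^10*q*t^4 + 39520*p^10*q*s*t^3 + 78336*p^10*q*s^2*t^2 + 64864*p^10*q*s^3*t + 19360*p^10*q*s^4 + 400*p^10*q^2*t^4 + 2176*p^10*q^2*s*t^3 + 4080*p^10*q^2*s^2*t^2 + 3232*p^10*q^2*s^3*t + 928*p^10*q^2*s^4 + 1760*p^11*t^4 + 8352*p^11*s*t^3 + 14496*p^11*s^2*t^2 + 10976*p^11*s^3*t + 3072*p^11*s^4 + 288*p^11*q*t^4 + 2496*p^11*q*s*t^3 + 5760*p^11*q*s^2*t^2 + 5184*p^11*q*s^3*t + 1632*p^11*q*s^4 + 32*p^11*q^2*s*t^3 + 96*p^11*q^2*s^2*t^2 + 96*p^11*q^2*s^3*t + 32*p^11*q^2*s^4 + 64*p^12*t^4 + 320*p^12*s*t^3 + 576*p^12*s^2*t^2 + 448*p^12*s^3*t + 128*p^12*s^4 + 64*p^12*q*s*t^3 + 192*p^12*q*s^2*t^2 + 192*p^12*q*s^3*t + 64*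p^12*q*s^4"
  by (intro add_nonneg_nonneg mult_nonneg_nonneg zero_le_power) (use assms in auto)

lemma H_pos:
  fixes s t :: real
  assumes "0 \<le> s" "0 \<le> t" "s + t = 1"
  shows "0 < 568808*t^4 + 557056*s^4"
proof -
  have "s > 0 \<or> t > 0" using assms by linarith
  then show ?thesis
  proof
    assume "s > 0"
    then have "0 < s^4" by simp
    moreover have "0 \<le> t^4" using assms by simp
    ultimately show ?thesis by linarith
  next
    assume "t > 0"
    then have "0 < t^4" by simp
    moreover have "0 \<le> s^4" using assms by simp
    ultimately show ?thesis by linarith
  qed
qed

lemma PW_pos:
  fixes i n s :: real
  assumes "1 \<le> i" "1 \<le> n" "0 \<le> s" "s \<le> 1"
  shows "0 < PW i n s"
proof -
  define p where "p = i - 1"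
  define q where "q = n - 1"
  define t where "t = 1 - s"
  have i: "i = p + 1" and n: "n = q + 1" unfolding p_def q_def by simp_all
  have eq: "PW i n s = (568808*t^4 + 557056*s^4) + (2271104*s*t^3 + 3391872*s^2*t^2 + 2246656*s^3*t + 820640*q*t^4 + 3256064*q*s*t^3 + 4825344*q*s^2*t^2 + 3168256*q*s^3*t + 778240*q*s^4 + 452592*q^2*t^4 + 1777920*q^2*s*t^3 + 2606208*q^2*s^2*t^2 + 1692672*q^2*s^3*t + 411648*q^2*s^4 + 113312*q^3*t^4 + 442112*q^3*s*t^3 + 645120*q^3*s^2*t^2 + 418816*q^3*s^3*t + 102400*q^3*s^4 + 10856*q^4*t^4 + 42368*q^4*s*t^3 + 62208*q^4*s^2*t^2 + 40960*q^4*s^3*t + 10240*q^4*s^4 + 3344900*p*t^4 + 13410848*p*s*t^3 + 20108224*p*s^2*t^2 + 13368320*p*s^3*t + 3325952*p*s^4 + 4458288*p*q*t^4 + 17765792*p*q*s*t^3 + 26426112*p*q*s^2*t^2 + 17403392*p*q*s^3*t + 4284416*p*q*s^4 + 2254904*p*q^2*t^4 + 8874400*p*q^2*s*t^3 + 13016384*p*q^2*s^2*t^2 + 8446464*p*q^2*s^3*t + 2049024*p*q^2*s^4 + 514288*p*q^3*t^4 + 2006240*p*q^3*s*t^3 + 2923136*p*q^3*s^2*t^2 + 1892352*p*q^3*s^3*t + 460800*p*q^3*s^4 + 44516*p*q^4*t^4 + 173760*p*q^4*s*t^3 + 255104*p*q^4*s^2*t^2 + 167936*p*q^4*s^3*t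 + 41984*p*q^4*s^4 + 8967090*p^2*t^4 + 36138880*p^2*s*t^3 + 54459712*p^2*s^2*t^2 + 36381184*p^2*s^3*t + 9093120*p^2*s^4 + 10976584*p^2*q*t^4 + 44002880*p^2*q*s*t^3 + 65809088*p^2*q*s^2*t^2 + 43547648*p^2*q*s^3*t + 10764288*p^2*q*s^4 + 5046700*p^2*q^2*t^4 + 19918528*p^2*q^2*s*t^3 + 29259968*p^2*q^2*s^2*t^2 + 18986240*p^2*q^2*s^3*t + 4597248*p^2*q^2*s^4 + 1036104*p^2*q^3*t^4 + 4042688*p^2*q^3*s*t^3 + 5883200*p^2*q^3*s^2*t^2 + 3797760*p^2*q^3*s^3*t + 920576*p^2*q^3*s^4 + 79666*p^2*q^4*t^4 + 311232*p^2*q^4*s*t^3 + 457216*p^2*q^4*s^2*t^2 + 301056*p^2*q^4*s^3*t + 75264*p^2*q^4*s^4 + 14485503*p^3*t^4 + 58754064*p^3*s*t^3 + 89096864*p^3*s^2*t^2 + 59885312*p^3*s^3*t + 15056896*p^3*s^4 + 16166348*p^3*q*t^4 + 65340560*p^3*q*s*t^3 + 98472320*p^3*q*s^2*t^2 + 65625216*p^3*q*s^3*t + 16326656*p^3*q*s^4 + 6682506*p^3*q^2*t^4 + 26483344*p^3*q^2*s*t^3 + 39010784*p^3*q^2*s^2*t^2 + 25341568*p^3*q^2*s^3*t + 6130944*p^3*q^2*s^4 + 1216300*p^3*q^3*t^4 + 4748336*p^3*q^3*s*t^3 + 6903360*p^3*q^3*s^2*t^2 + 4443392*p^3*q^3*s^3*t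 + 1071616*p^3*q^3*s^4 + 81263*p^3*q^4*t^4 + 317984*p^3*q^4*s*t^3 + 467776*p^3*q^4*s^2*t^2 + 308224*p^3*q^4*s^3*t + 77056*p^3*q^4*s^4 + 15696159*p^4*t^4 + 64168584*p^4*s*t^3 + 98062520*p^4*s^2*t^2 + 66412416*p^4*s^3*t + 16822272*p^4*s^4 + 15824268*p^4*q*t^4 + 64681984*p^4*q*s*t^3 + 98524464*p^4*q*s^2*t^2 + 66326400*p^4*q*s^3*t + 16659456*p^4*q*s^4 + 5798098*p^4*q^2*t^4 + 23112160*p^4*q^2*s*t^3 + 34195752*p^4*q^2*s^2*t^2 + 22275520*p^4*q^2*s^3*t + 5393536*p^4*q^2*s^4 + 917052*p^4*q^3*t^4 + 3583008*p^4*q^3*s*t^3 + 5204960*p^4*q^3*s^2*t^2 + 3340224*p^4*q^3*s^3*t + 801024*p^4*q^3*s^4 + 51671*p^4*q^4*t^4 + 202680*p^4*q^4*s*t^3 + 298800*p^4*q^4*s^2*t^2 + 197120*p^4*q^4*s^3*t + 49280*p^4*q^4*s^4 + 12010987*p^5*t^4 + 49582370*p^5*s*t^3 + 76491116*p^5*s^2*t^2 + 52282944*p^5*s^3*t + 13363200*p^5*s^4 + 10807534*p^5*q*t^4 + 44874666*p^5*q*s*t^3 + 69372464*p^5*q*s^2*t^2 + 47362976*p^5*q*s^3*t + 12057600*p^5*q*s^4 + 3444836*p^5*q^2*t^4 + 13845866*p^5*q^2*s*t^3 + 20626404*p^5*q^2*s^2*t^2 + 13507040*p^5*q^2*s^3*t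 + 3281600*p^5*q^2*s^4 + 460618*p^5*q^3*t^4 + 1801534*p^5*q^3*s*t^3 + 2615240*p^5*q^3*s^2*t^2 + 1673088*p^5*q^3*s^3*t + 398720*p^5*q^3*s^4 + 20969*p^5*q^4*t^4 + 82524*p^5*q^4*s*t^3 + 122024*p^5*q^4*s^2*t^2 + 80640*p^5*q^4*s^3*t + 20160*p^5*q^4*s^4 + 6649911*p^6*t^4 + 27783184*p^6*s*t^3 + 43356984*p^6*s^2*t^2 + 29965152*p^6*s^3*t + 7741440*p^6*s^4 + 5254048*p^6*q*t^4 + 22309816*p^6*q*s*t^3 + 35208596*p^6*q*s^2*t^2 + 24507264*p^6*q*s^3*t + 6354432*p^6*q*s^4 + 1419490*p^6*q^2*t^4 + 5775312*p^6*q^2*s*t^3 + 8695224*p^6*q^2*s^2*t^2 + 5745904*p^6*q^2*s^3*t + 1406496*p^6*q^2*s^4 + 154160*p^6*q^3*t^4 + 603656*p^6*q^3*s*t^3 + 875748*p^6*q^3*s^2*t^2 + 558416*p^6*q^3*s^3*t + 132160*p^6*q^3*s^4 + 5303*p^6*q^4*t^4 + 20960*p^6*q^4*s*t^3 + 31112*p^6*q^4*s^2*t^2 + 20608*p^6*q^4*s^3*t + 5152*p^6*q^4*s^4 + 2681166*p^7*t^4 + 11370522*p^7*s*t^3 + 17993628*p^7*s^2*t^2 + 12600528*p^7*s^3*t + 3296256*p^7*s^4 + 1817522*p^7*q*t^4 + 7977194*p^7*q*s*t^3 + 12961968*p^7*q*s^2*t^2 + 9262968*p^7*q*s^3*t +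 2460672*p^7*q*s^4 + 400622*p^7*q^2*t^4 + 1661130*p^7*q^2*s*t^3 + 2543524*p^7*q^2*s^2*t^2 + 1706680*p^7*q^2*s^3*t + 423664*p^7*q^2*s^4 + 33158*p^7*q^3*t^4 + 130006*p^7*q^3*s*t^3 + 188480*p^7*q^3*s^2*t^2 + 119760*p^7*q^3*s^3*t + 28128*p^7*q^3*s^4 + 764*p^7*q^4*t^4 + 3036*p^7*q^4*s*t^3 + 4528*p^7*q^4*s^2*t^2 + 3008*p^7*q^4*s^3*t + 752*p^7*q^4*s^4 + 780252*p^8*t^4 + 3371556*p^8*s*t^3 + 5426472*p^8*s^2*t^2 + 3859296*p^8*s^3*t + 1024128*p^8*s^4 + 438232*p^8*q*t^4 + 2024692*p^8*q*s*t^3 + 3430940*p^8*q*s^2*t^2 + 2540768*p^8*q*s^3*t + 696288*p^8*q*s^4 + 74124*p^8*q^2*t^4 + 317404*p^8*q^2*s*t^3 + 500032*p^8*q^2*s^2*t^2 + 344384*p^8*q^2*s^3*t + 87632*p^8*q^2*s^4 + 4160*p^8*q^3*t^4 + 16332*p^8*q^3*s*t^3 + 23660*p^8*q^3*s^2*t^2 + 14976*p^8*q^3*s^3*t + 3488*p^8*q^3*s^4 + 48*p^8*q^4*t^4 + 192*p^8*q^4*s*t^3 + 288*p^8*q^4*s^2*t^2 + 192*p^8*q^4*s^3*t + 48*p^8*q^4*s^4 + 159552*p^9*t^4 + 706000*p^9*s*t^3 + 1159840*p^9*s^2*t^2 + 839888*p^9*s^3*t + 226496*p^9*s^4 + 70096*p^9*q*t^4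 + 352776*p^9*q*s*t^3 + 636032*p^9*q*s^2*t^2 + 494120*p^9*q*s^3*t + 140768*p^9*q*s^4 + 8120*p^9*q^2*t^4 + 37064*p^9*q^2*s*t^3 + 61576*p^9*q^2*s^2*t^2 + 44440*p^9*q^2*s^3*t + 11808*p^9*q^2*s^4 + 232*p^9*q^3*t^4 + 912*p^9*q^3*s*t^3 + 1320*p^9*q^3*s^2*t^2 + 832*p^9*q^3*s^3*t + 192*p^9*q^3*s^4 + 21712*p^10*t^4 + 99040*p^10*s*t^3 + 166800*p^10*s^2*t^2 + 123328*p^10*s^3*t + 33856*p^10*s^4 + 6688*p^10*q*t^4 + 39520*p^10*q*s*t^3 + 78336*p^10*q*s^2*t^2 + 64864*p^10*q*s^3*t + 19360*p^10*q*s^4 + 400*p^10*q^2*t^4 + 2176*p^10*q^2*s*t^3 + 4080*p^10*q^2*s^2*t^2 + 3232*p^10*q^2*s^3*t + 928*p^10*q^2*s^4 + 1760*p^11*t^4 + 8352*p^11*s*t^3 + 14496*p^11*s^2*t^2 + 10976*p^11*s^3*t + 3072*p^11*s^4 + 288*p^11*q*t^4 + 2496*p^11*q*s*t^3 + 5760*p^11*q*s^2*t^2 + 5184*p^11*q*s^3*t + 1632*p^11*q*s^4 + 32*p^11*q^2*s*t^3 + 96*p^11*q^2*s^2*t^2 + 96*p^11*q^2*s^3*t + 32*p^11*q^2*s^4 + 64*p^12*t^4 + 320*p^12*s*t^3 + 576*p^12*s^2*t^2 + 448*p^12*s^3*t + 128*p^12*s^4 + 64*p^12*q*s*t^3 +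 192*p^12*q*s^2*t^2 + 192*p^12*q*s^3*t + 64*p^12*q*s^4)"
    unfolding i n by (rule poly_id) (simp add: t_def)
  have rn: "0 \<le> 2271104*s*t^3 + 3391872*s^2*t^2 + 2246656*s^3*t + 820640*q*t^4 + 3256064*q*s*t^3 + 4825344*q*s^2*t^2 + 3168256*q*s^3*t + 778240*q*s^4 + 452592*q^2*t^4 + 1777920*q^2*s*t^3 + 2606208*q^2*s^2*t^2 + 1692672*q^2*s^3*t + 411648*q^2*s^4 + 113312*q^3*t^4 + 442112*q^3*s*t^3 + 645120*q^3*s^2*t^2 + 418816*q^3*s^3*t + 102400*q^3*s^4 + 10856*q^4*t^4 + 42368*q^4*s*t^3 + 62208*q^4*s^2*t^2 + 40960*q^4*s^3*t + 10240*q^4*s^4 + 3344900*p*t^4 + 13410848*p*s*t^3 + 20108224*p*s^2*t^2 + 13368320*p*s^3*t + 3325952*p*s^4 + 4458288*p*q*t^4 + 17765792*p*q*s*t^3 + 26426112*p*q*s^2*t^2 + 17403392*p*q*s^3*t + 4284416*p*q*s^4 + 2254904*p*q^2*t^4 + 8874400*p*q^2*s*t^3 + 13016384*p*q^2*s^2*t^2 + 8446464*p*q^2*s^3*t + 2049024*p*q^2*s^4 + 514288*p*q^3*t^4 + 2006240*p*q^3*s*t^3 + 2923136*p*q^3*s^2*t^2 + 1892352*p*q^3*s^3*t + 460800*p*q^3*s^4 + 44516*p*q^4*t^4 + 173760*p*q^4*s*t^3 + 255104*p*q^4*s^2*t^2 + 167936*p*q^4*s^3*t + 41984*p*q^4*s^4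 + 8967090*p^2*t^4 + 36138880*p^2*s*t^3 + 54459712*p^2*s^2*t^2 + 36381184*p^2*s^3*t + 9093120*p^2*s^4 + 10976584*p^2*q*t^4 + 44002880*p^2*q*s*t^3 + 65809088*p^2*q*s^2*t^2 + 43547648*p^2*q*s^3*t + 10764288*p^2*q*s^4 + 5046700*p^2*q^2*t^4 + 19918528*p^2*q^2*s*t^3 + 29259968*p^2*q^2*s^2*t^2 + 18986240*p^2*q^2*s^3*t + 4597248*p^2*q^2*s^4 + 1036104*p^2*q^3*t^4 + 4042688*p^2*q^3*s*t^3 + 5883200*p^2*q^3*s^2*t^2 + 3797760*p^2*q^3*s^3*t + 920576*p^2*q^3*s^4 + 79666*p^2*q^4*t^4 + 311232*p^2*q^4*s*t^3 + 457216*p^2*q^4*s^2*t^2 + 301056*p^2*q^4*s^3*t + 75264*p^2*q^4*s^4 + 14485503*p^3*t^4 + 58754064*p^3*s*t^3 + 89096864*p^3*s^2*t^2 + 59885312*p^3*s^3*t + 15056896*p^3*s^4 + 16166348*p^3*q*t^4 + 65340560*p^3*q*s*t^3 + 98472320*p^3*q*s^2*t^2 + 65625216*p^3*q*s^3*t + 16326656*p^3*q*s^4 + 6682506*p^3*q^2*t^4 + 26483344*p^3*q^2*s*t^3 + 39010784*p^3*q^2*s^2*t^2 + 25341568*p^3*q^2*s^3*t + 6130944*p^3*q^2*s^4 + 1216300*p^3*q^3*t^4 + 4748336*p^3*q^3*s*t^3 + 6903360*p^3*q^3*s^2*t^2 + 4443392*p^3*q^3*s^3*t + 1071616*p^3*q^3*s^4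 + 81263*p^3*q^4*t^4 + 317984*p^3*q^4*s*t^3 + 467776*p^3*q^4*s^2*t^2 + 308224*p^3*q^4*s^3*t + 77056*p^3*q^4*s^4 + 15696159*p^4*t^4 + 64168584*p^4*s*t^3 + 98062520*p^4*s^2*t^2 + 66412416*p^4*s^3*t + 16822272*p^4*s^4 + 15824268*p^4*q*t^4 + 64681984*p^4*q*s*t^3 + 98524464*p^4*q*s^2*t^2 + 66326400*p^4*q*s^3*t + 16659456*p^4*q*s^4 + 5798098*p^4*q^2*t^4 + 23112160*p^4*q^2*s*t^3 + 34195752*p^4*q^2*s^2*t^2 + 22275520*p^4*q^2*s^3*t + 5393536*p^4*q^2*s^4 + 917052*p^4*q^3*t^4 + 3583008*p^4*q^3*s*t^3 + 5204960*p^4*q^3*s^2*t^2 + 3340224*p^4*q^3*s^3*t + 801024*p^4*q^3*s^4 + 51671*p^4*q^4*t^4 + 202680*p^4*q^4*s*t^3 + 298800*p^4*q^4*s^2*t^2 + 197120*p^4*q^4*s^3*t + 49280*p^4*q^4*s^4 + 12010987*p^5*t^4 + 49582370*p^5*s*t^3 + 76491116*p^5*s^2*t^2 + 52282944*p^5*s^3*t + 13363200*p^5*s^4 + 10807534*p^5*q*t^4 + 44874666*p^5*q*s*t^3 + 69372464*p^5*q*s^2*t^2 + 47362976*p^5*q*s^3*t + 12057600*p^5*q*s^4 + 3444836*p^5*q^2*t^4 + 13845866*p^5*q^2*s*t^3 + 20626404*p^5*q^2*s^2*t^2 + 13507040*p^5*q^2*s^3*t + 3281600*p^5*q^2*s^4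 + 460618*p^5*q^3*t^4 + 1801534*p^5*q^3*s*t^3 + 2615240*p^5*q^3*s^2*t^2 + 1673088*p^5*q^3*s^3*t + 398720*p^5*q^3*s^4 + 20969*p^5*q^4*t^4 + 82524*p^5*q^4*s*t^3 + 122024*p^5*q^4*s^2*t^2 + 80640*p^5*q^4*s^3*t + 20160*p^5*q^4*s^4 + 6649911*p^6*t^4 + 27783184*p^6*s*t^3 + 43356984*p^6*s^2*t^2 + 29965152*p^6*s^3*t + 7741440*p^6*s^4 + 5254048*p^6*q*t^4 + 22309816*p^6*q*s*t^3 + 35208596*p^6*q*s^2*t^2 + 24507264*p^6*q*s^3*t + 6354432*p^6*q*s^4 + 1419490*p^6*q^2*t^4 + 5775312*p^6*q^2*s*t^3 + 8695224*p^6*q^2*s^2*t^2 + 5745904*p^6*q^2*s^3*t + 1406496*p^6*q^2*s^4 + 154160*p^6*q^3*t^4 + 603656*p^6*q^3*s*t^3 + 875748*p^6*q^3*s^2*t^2 + 558416*p^6*q^3*s^3*t + 132160*p^6*q^3*s^4 + 5303*p^6*q^4*t^4 + 20960*p^6*q^4*s*t^3 + 31112*p^6*q^4*s^2*t^2 + 20608*p^6*q^4*s^3*t + 5152*p^6*q^4*s^4 + 2681166*p^7*t^4 + 11370522*p^7*s*t^3 + 17993628*p^7*s^2*t^2 + 12600528*p^7*s^3*t + 3296256*p^7*s^4 + 1817522*p^7*q*t^4 + 7977194*p^7*q*s*t^3 + 12961968*p^7*q*s^2*t^2 + 9262968*p^7*q*s^3*t + 2460672*p^7*q*s^4 + 400622*p^7*q^2*t^4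 + 1661130*p^7*q^2*s*t^3 + 2543524*p^7*q^2*s^2*t^2 + 1706680*p^7*q^2*s^3*t + 423664*p^7*q^2*s^4 + 33158*p^7*q^3*t^4 + 130006*p^7*q^3*s*t^3 + 188480*p^7*q^3*s^2*t^2 + 119760*p^7*q^3*s^3*t + 28128*p^7*q^3*s^4 + 764*p^7*q^4*t^4 + 3036*p^7*q^4*s*t^3 + 4528*p^7*q^4*s^2*t^2 + 3008*p^7*q^4*s^3*t + 752*p^7*q^4*s^4 + 780252*p^8*t^4 + 3371556*p^8*s*t^3 + 5426472*p^8*s^2*t^2 + 3859296*p^8*s^3*t + 1024128*p^8*s^4 + 438232*p^8*q*t^4 + 2024692*p^8*q*s*t^3 + 3430940*p^8*q*s^2*t^2 + 2540768*p^8*q*s^3*t + 696288*p^8*q*s^4 + 74124*p^8*q^2*t^4 + 317404*p^8*q^2*s*t^3 + 500032*p^8*q^2*s^2*t^2 + 344384*p^8*q^2*s^3*t + 87632*p^8*q^2*s^4 + 4160*p^8*q^3*t^4 + 16332*p^8*q^3*s*t^3 + 23660*p^8*q^3*s^2*t^2 + 14976*p^8*q^3*s^3*t + 3488*p^8*q^3*s^4 + 48*p^8*q^4*t^4 + 192*p^8*q^4*s*t^3 + 288*p^8*q^4*s^2*t^2 + 192*p^8*q^4*s^3*t + 48*p^8*q^4*s^4 + 159552*p^9*t^4 + 706000*p^9*s*t^3 + 1159840*p^9*s^2*t^2 + 839888*p^9*s^3*t + 226496*p^9*s^4 + 70096*p^9*q*t^4 + 352776*p^9*q*s*t^3 + 636032*p^9*q*s^2*t^2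 + 494120*p^9*q*s^3*t + 140768*p^9*q*s^4 + 8120*p^9*q^2*t^4 + 37064*p^9*q^2*s*t^3 + 61576*p^9*q^2*s^2*t^2 + 44440*p^9*q^2*s^3*t + 11808*p^9*q^2*s^4 + 232*p^9*q^3*t^4 + 912*p^9*q^3*s*t^3 + 1320*p^9*q^3*s^2*t^2 + 832*p^9*q^3*s^3*t + 192*p^9*q^3*s^4 + 21712*p^10*t^4 + 99040*p^10*s*t^3 + 166800*p^10*s^2*t^2 + 123328*p^10*s^3*t + 33856*p^10*s^4 + 6688*p^10*q*t^4 + 39520*p^10*q*s*t^3 + 78336*p^10*q*s^2*t^2 + 64864*p^10*q*s^3*t + 19360*p^10*q*s^4 + 400*p^10*q^2*t^4 + 2176*p^10*q^2*s*t^3 + 4080*p^10*q^2*s^2*t^2 + 3232*p^10*q^2*s^3*t + 928*p^10*q^2*s^4 + 1760*p^11*t^4 + 8352*p^11*s*t^3 + 14496*p^11*s^2*t^2 + 10976*p^11*s^3*t + 3072*p^11*s^4 + 288*p^11*q*t^4 + 2496*p^11*q*s*t^3 + 5760*p^11*q*s^2*t^2 + 5184*p^11*q*s^3*t + 1632*p^11*q*s^4 + 32*p^11*q^2*s*t^3 + 96*p^11*q^2*s^2*t^2 + 96*p^11*q^2*s^3*t + 32*p^11*q^2*s^4 + 64*p^12*t^4 + 320*p^12*s*t^3 + 576*p^12*s^2*t^2 + 448*p^12*s^3*t + 128*p^12*s^4 + 64*p^12*q*s*t^3 + 192*p^12*q*s^2*t^2 + 192*p^12*q*s^3*t + 64*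p^12*q*s^4"
    by (rule R_nonneg) (use assms in \<open>simp_all add: p_def q_def t_def\<close>)
  have hp: "0 < 568808*t^4 + 557056*s^4"
    by (rule H_pos) (use assms in \<open>simp_all add: t_def\<close>)
  show ?thesis unfolding eq by (rule add_pos_nonneg[OF hp rn])
qed

definition cc :: "nat \<Rightarrow> nat \<Rightarrow> real" where
  "cc m k = 2 ^ k * real ((2*m - 2*k) choose (m - k)) * real ((m + k) choose k)"

definition S :: "nat \<Rightarrow> nat \<Rightarrow> real" where
  "S j m = (\<Sum>k=0..m. cc m k * real (k choose j))"

lemma bm_S: "boros_moll j m = (1 / 2 ^ (2 * m)) * S j m"
proof -
  have "(\<Sum>k=0..m. cc m k * real (k choose j)) = (\<Sum>k=j..m. cc m k * real (k choose j))"
    by (rule sum.mono_neutral_right) auto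
  then show ?thesis unfolding boros_moll_def S_def cc_def by simp
qed

lemma cc_pos: "0 < cc m k"
  unfolding cc_def by simp

lemma B1: "real (Suc j) * real (k choose Suc j) = (real k - real j) * real (k choose j)"
proof (cases "j \<le> k")
  case True
  have "Suc j * (k choose Suc j) = (k - j) * (k choose j)"
    using binomial_absorption binomial_absorb_comp by metis
  then have "real (Suc j * (k choose Suc j)) = real ((k - j) * (k choose j))" by simp
  then show ?thesis using True by (simp add: of_nat_diff algebra_simps)
next
  case False
  then show ?thesis by (simp add: binomial_eq_0)
qed

lemma B3: "1 \<le> k \<Longrightarrow> real k * real ((k - 1) choose j) = (real k - real j) * real (k choose j)"
proof (cases "j \<le> k")
  case True
  have "(k - j) * (k choose j) = k * ((k - 1) choose j)"
    by (rule binomial_absorb_comp)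
  then have "real ((k - j) * (k choose j)) = real (k * ((k - 1) choose j))" by simp
  then show ?thesis using True by (simp add: of_nat_diff)
next
  case False
  then show ?thesis by (simp add: binomial_eq_0)
qed

lemma cc_rec:
  assumes "Suc k \<le> m"
  shows "cc m k * (real m - real k) * (real m + real k + 1)
       = cc m (Suc k) * real (Suc k) * (2 * real m - 2 * real k - 1)"
proof -
  define N where "N = m - Suc k"
  have m: "m = k + Suc N" using assms unfolding N_def by simp
  have e1: "2*m - 2*k = Suc (Suc (2*N))" "m - k = Suc N" "2*m - 2*Suc k = 2*N" "m - Suc k = N"
    "m + Suc k = Suc (m + k)"
    using m by auto
  have F1: "Suc N * (Suc (Suc (2*N)) choose Suc N) = Suc (Suc (2*N)) * (Suc (2*N) choose N)"
    by (rule Suc_times_binomial)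
  have F2: "(Suc (2*N) - N) * (Suc (2*N) choose N) = Suc (2*N) * ((Suc (2*N) - 1) choose N)"
    by (rule binomial_absorb_comp)
  have F2': "Suc N * (Suc (2*N) choose N) = Suc (2*N) * (2*N choose N)"
    using F2 by (simp add: Suc_diff_le del: binomial_Suc_Suc)
  have F3: "Suc k * (Suc (m + k) choose Suc k) = Suc (m + k) * ((m + k) choose k)"
    by (rule Suc_times_binomial)
  define X where "X = real (Suc (Suc (2*N)) choose Suc N)"
  define Y where "Y = real (Suc (2*N) choose N)"
  define Z where "Z = real (2*N choose N)"
  define U where "U = real (Suc (m + k) choose Suc k)"
  define V where "V = real ((m + k) choose k)"
  have R1': "real (Suc N) * X = real (Suc (Suc (2*N))) * Y"
    unfolding X_def Y_def of_nat_mult[symmetric] F1 ..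
  have R2': "real (Suc N) * Y = real (Suc (2*N)) * Z"
    unfolding Y_def Z_def of_nat_mult[symmetric] F2' ..
  have R3': "real (Suc k) * U = real (Suc (m + k)) * V"
    unfolding U_def V_def of_nat_mult[symmetric] F3 ..
  have R1: "(real N + 1) * X = (2 * real N + 2) * Y" using R1' by (simp add: algebra_simps)
  have R2: "(real N + 1) * Y = (2 * real N + 1) * Z" using R2' by (simp add: algebra_simps)
  have R3: "(real k + 1) * U = (real m + real k + 1) * V" using R3' by (simp add: algebra_simps)
  have "(real N + 1) * ((real N + 1) * X - 2 * (2 * real N + 1) * Z) = 0"
    using R1 R2 by algebra
  then have R12: "(real N + 1) * X = 2 * (2 * real N + 1) * Z" by simp
  have mk1: "real m - real k = real N + 1" and mk2: "2 * real m - 2 * real k - 1 = 2 * real N + 1"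
    using m by simp_all
  have c1: "cc m k = 2^k * X * V" unfolding cc_def X_def V_def e1 by simp
  have c2: "cc m (Suc k) = 2 * 2^k * Z * U" unfolding cc_def Z_def U_def e1
    by simp
  have "cc m k * (real m - real k) * (real m + real k + 1)
      = 2^k * V * (real m + real k + 1) * ((real N + 1) * X)"
    unfolding c1 mk1 by (simp only: mult_ac)
  also have "\<dots> = 2^k * V * (real m + real k + 1) * (2 * (2 * real N + 1) * Z)"
    unfolding R12 ..
  also have "\<dots> = 2 * 2^k * Z * (2 * real N + 1) * ((real m + real k + 1) * V)"
    by (simp only: mult_ac)
  also have "\<dots> = 2 * 2^k * Z * (2 * real N + 1) * ((real k + 1) * U)"
    unfolding R3 ..
  also have "\<dots> = cc m (Suc k) * real (Suc k) * (2 * real m - 2 * real k - 1)"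
    unfolding c2 mk2 by (simp add: mult_ac)
  finally show ?thesis .
qed

definition G :: "nat \<Rightarrow> nat \<Rightarrow> nat \<Rightarrow> real" where
  "G j m k = (case k of 0 \<Rightarrow> 0 | Suc k' \<Rightarrow>
      cc m k' * real (k' choose j) * (real m - real k') * (real m + real k' + 1))"

lemma G_eq:
  assumes "k \<le> m"
  shows "G j m k = cc m k * real (k choose j) * (2 * real m - 2 * real k + 1) * (real k - real j)"
proof (cases k)
  case 0
  have "(real 0 - real j) * real (0 choose j) = 0" using B1[of j 0] by simp
  then show ?thesis using 0 by (auto simp: G_def)
next
  case (Suc k')
  have h1: "cc m k' * (real m - real k') * (real m + real k' + 1)
       = cc m (Suc k') * real (Suc k') * (2 * real m - 2 * real k' - 1)"
    using assms Suc by (intro cc_rec) simp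
  have h2: "real (Suc k') * real ((Suc k' - 1) choose j) = (real (Suc k') - real j) * real (Suc k' choose j)"
    by (rule B3) simp
  have h2': "(real k' + 1) * real (k' choose j) = (real k' + 1 - real j) * real (Suc k' choose j)"
    using h2 by (simp add: algebra_simps)
  have h1': "cc m k' * (real m - real k') * (real m + real k' + 1)
       = cc m (Suc k') * (real k' + 1) * (2 * real m - 2 * real k' - 1)"
    using h1 by (simp add: algebra_simps)
  show ?thesis unfolding Suc G_def using h1' h2' by simp algebra
qed

lemma F_eq:
  assumes "k \<le> m"
  shows "cc m k * ((real j + 1) * (real j + 2) * real (k choose Suc (Suc j))
     - (2 * real m + 1) * (real j + 1) * real (k choose Suc j)
     + (real m - real j) * (real m + real j + 1) * real (k choose j))
     = G j m (Suc k) - G j m k"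
proof -
  have b1: "(real j + 1) * real (k choose Suc j) = (real k - real j) * real (k choose j)"
    using B1[of j k] by (simp add: algebra_simps)
  have b2: "(real j + 2) * real (k choose Suc (Suc j)) = (real k - real j - 1) * real (k choose Suc j)"
    using B1[of "Suc j" k] by (simp add: algebra_simps)
  have g1: "G j m (Suc k) = cc m k * real (k choose j) * (real m - real k) * (real m + real k + 1)"
    by (simp add: G_def)
  show ?thesis unfolding g1 G_eq[OF assms] using b1 b2 by algebra
qed

lemma S_rec:
  "(real j + 1) * (real j + 2) * S (Suc (Suc j)) m - (2 * real m + 1) * (real j + 1) * S (Suc j) m
    + (real m - real j) * (real m + real j + 1) * S j m = 0"
proof -
  define A where "A = (real j + 1) * (real j + 2)"
  define B where "B = (2 * real m + 1) * (real j + 1)"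
  define C where "C = (real m - real j) * (real m + real j + 1)"
  have set: "{0..m} = {..<Suc m}" by auto
  have "A * S (Suc (Suc j)) m - B * S (Suc j) m + C * S j m
     = (\<Sum>k<Suc m. cc m k * (A * real (k choose Suc (Suc j)) - B * real (k choose Suc j)
          + C * real (k choose j)))"
    unfolding S_def set
    by (simp add: sum.distrib sum_subtractf sum_distrib_left algebra_simps)
  also have "\<dots> = (\<Sum>k<Suc m. G j m (Suc k) - G j m k)"
    by (rule sum.cong) (use F_eq in \<open>auto simp: A_def B_def C_def\<close>)
  also have "\<dots> = G j m (Suc m) - G j m 0" by (rule sum_lessThan_telescope)
  also have "\<dots> = 0" by (simp add: G_def)
  finally show ?thesis unfolding A_def B_def C_def .
qed

lemma S_nonneg: "0 \<le> S j m"
  unfolding S_def using cc_pos by (intro sum_nonneg) (simp add: less_imp_le)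

lemma S_pos: "j \<le> m \<Longrightarrow> 0 < S j m"
  unfolding S_def
  by (rule sum_pos2[where i = m]) (use cc_pos in \<open>auto simp: less_imp_le\<close>)

lemma S_zero: "m < j \<Longrightarrow> S j m = 0"
  unfolding S_def by (intro sum.neutral) auto

lemma low_step:
  fixes J M X Y Z :: real
  assumes "1 \<le> J" "J \<le> M" "0 \<le> Y"
    and rec: "J*(J+1)*Z - (2*M+1)*J*Y + (M-J+1)*(M+J)*X = 0"
    and IH: "(M - (J+1) + 1)*(2*(J+1) - 1)*Y \<le> 2*(J+1)^2*Z"
  shows "(M - J + 1)*(2*J - 1)*X \<le> 2*J^2*Y"
proof -
  define Q where "Q = J*(2*M*J+3*M+2*J^2+3*J+2)*Y - 2*(J+1)*((M-J+1)*(M+J)*X)"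
  have A: "Q = J*(2*(J+1)^2*Z - (M-(J+1)+1)*(2*(J+1)-1)*Y)"
    unfolding Q_def using rec by algebra
  have A0: "0 \<le> Q" unfolding A using IH assms by simp
  have B: "2*(J+1)*(M+J)*(2*J^2*Y - (M-J+1)*(2*J-1)*X) = (2*J-1)*Q + J*(3*M+2-J)*Y"
    unfolding Q_def by algebra
  have "0 \<le> (2*J-1)*Q + J*(3*M+2-J)*Y"
    using A0 assms by (intro add_nonneg_nonneg mult_nonneg_nonneg) auto
  then have "0 \<le> 2*(J+1)*(M+J)*(2*J^2*Y - (M-J+1)*(2*J-1)*X)" unfolding B .
  moreover have "0 < 2*(J+1)*(M+J)" using assms by simp
  ultimately have "0 \<le> 2*J^2*Y - (M-J+1)*(2*J-1)*X"
    by (simp add: zero_le_mult_iff)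
  then show ?thesis by simp
qed

lemma up_step:
  fixes J M X Y Z :: real
  assumes "1 \<le> J" "J \<le> M" "0 \<le> Y"
    and rec: "J*(J+1)*Z - (2*M+1)*J*Y + (M-J+1)*(M+J)*X = 0"
    and IH: "(J+1)*Z \<le> (M - (J+1) + 1)*Y"
  shows "J*Y \<le> (M - J + 1)*X"
proof -
  have B: "(M+J)*((M-J+1)*X - J*Y) = J*(((M-(J+1)+1)*Y - (J+1)*Z) + Y)"
    using rec by algebra
  have "0 \<le> J*(((M-(J+1)+1)*Y - (J+1)*Z) + Y)"
    using assms by (intro mult_nonneg_nonneg add_nonneg_nonneg) auto
  then have "0 \<le> (M+J)*((M-J+1)*X - J*Y)" unfolding B .
  moreover have "0 < M+J" using assms by simp
  ultimately have "0 \<le> (M-J+1)*X - J*Y" by (simp add: zero_le_mult_iff)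
  then show ?thesis by simp
qed

lemma rec_at:
  assumes "1 \<le> j"
  shows "real j*(real j+1)*S (Suc j) m - (2*real m+1)*real j*S j m
     + (real m-real j+1)*(real m+real j)*S (j-1) m = 0"
proof -
  obtain j0 where j: "j = Suc j0" using assms by (cases j) auto
  show ?thesis using S_rec[of j0 m] unfolding j by (simp add: algebra_simps)
qed

lemma lower:
  assumes "1 \<le> j" "j \<le> Suc m"
  shows "(real m - real j + 1)*(2*real j - 1)*S (j-1) m \<le> 2*(real j)^2 * S j m"
  using assms(2) assms(1)
proof (induction rule: inc_induct)
  case base
  then show ?case by (simp add: S_zero)
next
  case (step n)
  have IH: "(real m - real (Suc n) + 1)*(2*real (Suc n) - 1)*S n m \<le> 2*(real (Suc n))^2 * S (Suc n) m"
    using step by simp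
  show ?case
    by (rule low_step[where Z = "S (Suc n) m"])
      (use step IH rec_at[of n m] S_nonneg in \<open>auto simp: algebra_simps\<close>)
qed

lemma upper:
  assumes "1 \<le> j" "j \<le> Suc m"
  shows "real j * S j m \<le> (real m - real j + 1) * S (j-1) m"
  using assms(2) assms(1)
proof (induction rule: inc_induct)
  case base
  then show ?case by (simp add: S_zero)
next
  case (step n)
  have IH: "real (Suc n) * S (Suc n) m \<le> (real m - real (Suc n) + 1) * S n m"
    using step by simp
  show ?case
    by (rule up_step[where Z = "S (Suc n) m"])
      (use step IH rec_at[of n m] S_nonneg in \<open>auto simp: algebra_simps\<close>)
qed

lemma glue_id:
  fixes a b c e i n s :: real
  assumes hK: "(n+1)*(n+2*i) * a = (2*(i+n)+1)*i*b - i*(i+1)*c"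
   and hE: "(i+1)*(i+2)*e = (2*(i+n)+1)*(i+1)*c - n*(2*i+n+1)*b"
   and hC: "2*(i+1)^2*c = n*(2*i+1+s)*b"
  shows "((n+1)*(n+2*i))^2*(i+1)*(i+2)*(2*(i+1)^2)^4*(b^2*(b^2 - a*c) - a^2*(c^2 - b*e)) = b^4 * PW i n s"
  using hK hE hC unfolding PW_def Let_def by algebra

lemma glue:
  fixes I M a b c e :: real
  assumes I1: "1 \<le> I" and n1: "1 \<le> M - I" and b: "0 < b"
    and hK: "I*(I+1)*c - (2*M+1)*I*b + (M-I+1)*(M+I)*a = 0"
    and hE: "(I+1)*(I+2)*e - (2*M+1)*(I+1)*c + (M-I)*(M+I+1)*b = 0"
    and hL: "(M-(I+1)+1)*(2*(I+1)-1)*b \<le> 2*(I+1)^2*c"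
    and hU: "(I+1)*c \<le> (M-(I+1)+1)*b"
  shows "b^2*(b^2 - a*c) - a^2*(c^2 - b*e) > 0"
proof -
  define n where "n = M - I"
  have M: "M = I + n" by (simp add: n_def)
  have nb: "0 < n*b" using n1 b n_def by simp
  have hL': "n*(2*I+1)*b \<le> 2*(I+1)^2*c" using hL by (simp add: n_def algebra_simps)
  have hU': "(I+1)*c \<le> n*b" using hU by (simp add: n_def algebra_simps)
  define s where "s = (2*(I+1)^2*c - n*(2*I+1)*b)/(n*b)"
  have nz: "n \<noteq> 0" "b \<noteq> 0" using n1 b n_def by auto
  have sn: "s*(n*b) = 2*(I+1)^2*c - n*(2*I+1)*b"
    unfolding s_def using nz by (simp add: field_simps)
  have hC: "2*(I+1)^2*c = n*(2*I+1+s)*b"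
    using sn by algebra
  have s0: "0 \<le> s" unfolding s_def using hL' nb by (intro divide_nonneg_pos) auto
  have "2*(I+1)*((I+1)*c) \<le> 2*(I+1)*(n*b)"
    using hU' I1 by (intro mult_left_mono) auto
  then have "2*(I+1)^2*c - n*(2*I+1)*b \<le> n*b" by (simp add: power2_eq_square algebra_simps)
  then have s1: "s \<le> 1" unfolding s_def using nb by simp
  have hK': "(n+1)*(n+2*I)*a = (2*(I+n)+1)*I*b - I*(I+1)*c" using hK unfolding M by algebra
  have hE': "(I+1)*(I+2)*e = (2*(I+n)+1)*(I+1)*c - n*(2*I+n+1)*b" using hE unfolding M by algebra
  note eq = glue_id[OF hK' hE' hC]
  have "0 < PW I n s" using PW_pos I1 n1 s0 s1 n_def by simp
  then have "0 < b^4 * PW I n s" using b by simp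
  then have pos: "0 < ((n+1)*(n+2*I))^2*(I+1)*(I+2)*(2*(I+1)^2)^4*(b^2*(b^2 - a*c) - a^2*(c^2 - b*e))"
    unfolding eq .
  have cp: "0 < ((n+1)*(n+2*I))^2*(I+1)*(I+2)*(2*(I+1)^2)^4" using I1 n1 n_def by simp
  show ?thesis by (rule zero_less_mult_pos[OF pos cp])
qed

theorem theorem1p1:
  fixes m i :: nat
  assumes "m \<ge> 2" and "1 \<le> i" and "i \<le> m - 1"
  shows "(boros_moll i m)^2 * ((boros_moll i m)^2 - boros_moll (i-1) m * boros_moll (i+1) m)
       > (boros_moll (i-1) m)^2 * ((boros_moll (i+1) m)^2 - boros_moll i m * boros_moll (i+2) m)"
proof -
  define a where "a = S (i-1) m"
  define b where "b = S i m"
  define c where "c = S (Suc i) m"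
  define e where "e = S (Suc (Suc i)) m"
  define \<beta> :: real where "\<beta> = 1 / 2 ^ (2 * m)"
  have im: "i < m" using assms by simp
  have hK: "real i*(real i+1)*c - (2*real m+1)*real i*b + (real m-real i+1)*(real m+real i)*a = 0"
    using rec_at[of i m] assms unfolding a_def b_def c_def by simp
  have hE: "(real i+1)*(real i+2)*e - (2*real m+1)*(real i+1)*c + (real m-real i)*(real m+real i+1)*b = 0"
    using S_rec[of i m] unfolding b_def c_def e_def by simp
  have hL: "(real m-(real i+1)+1)*(2*(real i+1)-1)*b \<le> 2*(real i+1)^2*c"
    using lower[of "Suc i" m] im unfolding b_def c_def by (simp add: algebra_simps)
  have hU: "(real i+1)*c \<le> (real m-(real i+1)+1)*b"
    using upper[of "Suc i" m] im unfolding b_def c_def by (simp add: algebra_simps)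
  have I1: "1 \<le> real i" using assms by simp
  have n1: "1 \<le> real m - real i" using im by linarith
  have bpos: "0 < b" unfolding b_def using im by (intro S_pos) simp
  have G: "b^2*(b^2 - a*c) - a^2*(c^2 - b*e) > 0"
    by (rule glue[OF I1 n1 bpos hK hE hL hU])
  have bpos: "0 < \<beta>" unfolding \<beta>_def by simp
  have d: "boros_moll (i-1) m = \<beta> * a" "boros_moll i m = \<beta> * b"
    "boros_moll (i+1) m = \<beta> * c" "boros_moll (i+2) m = \<beta> * e"
    unfolding bm_S a_def b_def c_def e_def \<beta>_def by simp_all
  have "(\<beta>*b)^2 * ((\<beta>*b)^2 - (\<beta>*a) * (\<beta>*c)) - (\<beta>*a)^2 * ((\<beta>*c)^2 - (\<beta>*b) * (\<beta>*e))
      = \<beta>^4 * (b^2*(b^2 - a*c) - a^2*(c^2 - b*e))" by algebra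
  moreover have "0 < \<beta>^4 * (b^2*(b^2 - a*c) - a^2*(c^2 - b*e))" using G bpos by simp
  ultimately show ?thesis unfolding d by linarith
qed

end
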